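(* Let $\mathbb F_q$ be a finite field, let $B \subseteq \mathbb F_q^m$ with $r := \mathrm{rank}_{\mathrm{aff}}(B) \geq 1$, and let $\mathcal F$ be any family of affine configurations (subsets of finite-dimensional vector spaces over $\mathbb F_q$). Let $n \geq r$, $N = q^n$, and let $\alpha$ be defined by $\mathrm{ex}_{\mathrm{aff}}(n, B \times \mathcal F) = \alpha N$. Let $c(B,n,\alpha)$ denote the minimum, over all $A \subseteq \mathbb F_q^n$ with $|A| = \alpha N$, of the number of non-degenerate affine homomorphisms $B \to A$. Then \[c(B,n,\alpha) \leq q^{r-1} N^{r-1}\, \mathrm{ex}_{\mathrm{aff}}(n-r+1, \mathcal F).\]
   Context: An affine relation on $x_1,\ldots,x_k$ is an equation $\sum_i \lambda_i x_i = 0$ with $\lambda_i \in \mathbb F_q$, $\sum_i \lambda_i = 0$; a set is affinely independent if it has no such relation with some $\lambda_i \neq 0$, and $\mathrm{rank}_{\mathrm{aff}}(B)$ is the size of a maximal affinely independent subset of $B$. For $B \subseteq \mathbb F_q^m$, $A \subseteq \mathbb F_q^n$, an affine homomorphism $B \to A$ is a map extending to an affine map $\mathbb F_q^m \to \mathbb F_q^n$; it is non-degenerate if it is injective and its inverse on the image is also an affine homomorphism. $A$ contains an affine copy of $B$ if there is a non-degenerate affine homomorphism $B \to A$. For a family $\mathcal B$ of configurations, $\mathrm{ex}_{\mathrm{aff}}(n,\mathcal B)$ is the maximum size of a subset of $\mathbb F_q^n$ containing no affine copy of any member of $\mathcal B$. For $B \subseteq \mathbb F_q^m$ and $F \subseteq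 \mathbb F_q^{k}$, $B \times F = \{(x,y) \in \mathbb F_q^{m+k} : x \in B, y \in F\}$, and $B \times \mathcal F := \{B \times F : F \in \mathcal F\}$. *)

theory Defs
  imports Main
begin

text \<open>Vectors of F_q^n are represented as functions nat => 'a vanishing at all
indices >= n.\<close>
definition fvec :: "nat \<Rightarrow> (nat \<Rightarrow> 'a::zero) set" where
  "fvec n = {x. \<forall>i\<ge>n. x i = 0}"

definition affine_map :: "nat \<Rightarrow> nat \<Rightarrow> ((nat \<Rightarrow> 'a::comm_ring_1) \<Rightarrow> (nat \<Rightarrow> 'a)) \<Rightarrow> bool" where
  "affine_map m n f \<longleftrightarrow> (\<exists>(M :: nat \<Rightarrow> nat \<Rightarrow> 'a) (b :: nat \<Rightarrow> 'a).
     \<forall>x\<in>fvec m. f x = (\<lambda>i. if i < n then b i + (\<Sum>j<m. M i j * x j) else 0))"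

definition affine_hom :: "nat \<Rightarrow> nat \<Rightarrow> (nat \<Rightarrow> 'a::comm_ring_1) set \<Rightarrow> ((nat \<Rightarrow> 'a) \<Rightarrow> (nat \<Rightarrow> 'a)) \<Rightarrow> bool" where
  "affine_hom m n B \<phi> \<longleftrightarrow> (\<exists>f. affine_map m n f \<and> (\<forall>x\<in>B. \<phi> x = f x))"

definition nondeg_hom :: "nat \<Rightarrow> nat \<Rightarrow> (nat \<Rightarrow> 'a::comm_ring_1) set \<Rightarrow> (nat \<Rightarrow> 'a) set \<Rightarrow> ((nat \<Rightarrow> 'a) \<Rightarrow> (nat \<Rightarrow> 'a)) \<Rightarrow> bool" where
  "nondeg_hom m n B A \<phi> \<longleftrightarrow> (\<forall>x\<in>B. \<phi> x \<in> A) \<and> affine_hom m n B \<phi> \<and> inj_on \<phi> B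
     \<and> affine_hom n m (\<phi> ` B) (the_inv_into B \<phi>)"

definition affine_copy :: "nat \<Rightarrow> nat \<Rightarrow> (nat \<Rightarrow> 'a::comm_ring_1) set \<Rightarrow> (nat \<Rightarrow> 'a) set \<Rightarrow> bool" where
  "affine_copy m n B A \<longleftrightarrow> (\<exists>\<phi>. nondeg_hom m n B A \<phi>)"

text \<open>Number of non-degenerate affine homomorphisms B -> A (maps B -> A are
identified with functions that are the zero vector outside B).\<close>
definition num_nondeg_hom :: "nat \<Rightarrow> nat \<Rightarrow> (nat \<Rightarrow> 'a::comm_ring_1) set \<Rightarrow> (nat \<Rightarrow> 'a) set \<Rightarrow> nat" where
  "num_nondeg_hom m n B A = card {\<phi>. nondeg_hom m n B A \<phi> \<and> (\<forall>x. x \<notin> B \<longrightarrow> \<phi> x = (\<lambda>_. 0))}"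

text \<open>A configuration is a pair (k, C) with C a subset of F^k.\<close>
type_synonym 'a config = "nat \<times> (nat \<Rightarrow> 'a) set"

text \<open>ex_aff(n, family): max size of a subset of F^n with no affine copy of any member
(0 if no subset qualifies).\<close>
definition ex_aff :: "nat \<Rightarrow> ('a::comm_ring_1) config set \<Rightarrow> nat" where
  "ex_aff n \<B> = Max (insert 0 {card A | A. A \<subseteq> fvec n \<and> (\<forall>(k, C)\<in>\<B>. \<not> affine_copy k n C A)})"

definition conf_prod :: "nat \<Rightarrow> (nat \<Rightarrow> 'a::zero) set \<Rightarrow> 'a config \<Rightarrow> 'a config" where
  "conf_prod m B KF = (m + fst KF,
     {(\<lambda>i. if i < m then x i else y (i - m)) | x y. x \<in> B \<and> y \<in> snd KF})"

definition aff_indep :: "(nat \<Rightarrow> 'a::comm_ring_1) set \<Rightarrow> bool" where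
  "aff_indep S \<longleftrightarrow> (\<forall>c. (\<Sum>x\<in>S. c x) = 0 \<and> (\<forall>i. (\<Sum>x\<in>S. c x * x i) = 0)
      \<longrightarrow> (\<forall>x\<in>S. c x = 0))"

definition rank_aff :: "(nat \<Rightarrow> 'a::comm_ring_1) set \<Rightarrow> nat" where
  "rank_aff B = Max {card S | S. S \<subseteq> B \<and> finite S \<and> aff_indep S}"

text \<open>c(B,n,alpha) with alpha N = s: minimum over A in F^n with |A| = s.\<close>
definition c_min :: "nat \<Rightarrow> nat \<Rightarrow> (nat \<Rightarrow> 'a::comm_ring_1) set \<Rightarrow> nat \<Rightarrow> nat" where
  "c_min m n B s = Min {num_nondeg_hom m n B A | A. A \<subseteq> fvec n \<and> card A = s}"

end

theory Submission
  imports Defs "HOL-Library.FuncSet"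
begin

lemma fvecI: "(\<And>i. i \<ge> n \<Longrightarrow> x i = 0) \<Longrightarrow> x \<in> fvec n"
  by (simp add: fvec_def)

lemma fvecD: "x \<in> fvec n \<Longrightarrow> i \<ge> n \<Longrightarrow> x i = 0"
  by (simp add: fvec_def)

lemma am_intro:
  assumes "\<And>x. x \<in> fvec m \<Longrightarrow> f x = (\<lambda>i. if i < n then b i + (\<Sum>j<m. M i j * x j) else 0)"
  shows "affine_map m n f"
  unfolding affine_map_def using assms by blast

lemma am_fvec: "affine_map m n f \<Longrightarrow> x \<in> fvec m \<Longrightarrow> f x \<in> fvec n"
  unfolding affine_map_def fvec_def by auto

lemma am_cong: "affine_map m n f \<Longrightarrow> (\<And>x. x \<in> fvec m \<Longrightarrow> g x = f x) \<Longrightarrow> affine_map m n g"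
  unfolding affine_map_def by metis

lemma am_comp:
  fixes g :: "(nat \<Rightarrow> 'a::comm_ring_1) \<Rightarrow> nat \<Rightarrow> 'a"
  assumes g: "affine_map m k g" and f: "affine_map k n f"
  shows "affine_map m n (\<lambda>x. f (g x))"
proof -
  obtain M b where Mb: "\<forall>x\<in>fvec k. f x = (\<lambda>i. if i < n then b i + (\<Sum>j<k. M i j * x j) else 0)"
    using f unfolding affine_map_def by blast
  obtain M' b' where Mb': "\<forall>x\<in>fvec m. g x = (\<lambda>i. if i < k then b' i + (\<Sum>j<m. M' i j * x j) else 0)"
    using g unfolding affine_map_def by blast
  show ?thesis
  proof (rule am_intro[where b = "\<lambda>i. b i + (\<Sum>j<k. M i j * b' j)" and M = "\<lambda>i l. \<Sum>j<k. M i j * M' j l"])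
    fix x :: "nat \<Rightarrow> 'a" assume x: "x \<in> fvec m"
    have gx: "g x \<in> fvec k" using am_fvec[OF g x] .
    have "f (g x) = (\<lambda>i. if i < n then b i + (\<Sum>j<k. M i j * g x j) else 0)"
      using Mb gx by blast
    also have "\<dots> = (\<lambda>i. if i < n then b i + (\<Sum>j<k. M i j * b' j) + (\<Sum>l<m. (\<Sum>j<k. M i j * M' j l) * x l) else 0)"
    proof (rule ext)
      fix i
      have "(\<Sum>j<k. M i j * g x j) = (\<Sum>j<k. M i j * (b' j + (\<Sum>l<m. M' j l * x l)))"
        by (rule sum.cong) (use Mb' x in auto)
      also have "\<dots> = (\<Sum>j<k. M i j * b' j) + (\<Sum>j<k. \<Sum>l<m. M i j * M' j l * x l)"
        by (simp add: distrib_left sum.distrib sum_distrib_left mult.assoc)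
      also have "\<dots> = (\<Sum>j<k. M i j * b' j) + (\<Sum>l<m. (\<Sum>j<k. M i j * M' j l) * x l)"
        by (subst sum.swap) (simp add: sum_distrib_right)
      finally show "(if i < n then b i + (\<Sum>j<k. M i j * g x j) else 0) =
         (if i < n then b i + (\<Sum>j<k. M i j * b' j) + (\<Sum>l<m. (\<Sum>j<k. M i j * M' j l) * x l) else 0)"
        by (simp add: add.assoc)
    qed
    finally show "f (g x) = (\<lambda>i. if i < n then b i + (\<Sum>j<k. M i j * b' j) + (\<Sum>l<m. (\<Sum>j<k. M i j * M' j l) * x l) else 0)" .
  qed
qed

lemma am_add:
  fixes f :: "(nat \<Rightarrow> 'a::comm_ring_1) \<Rightarrow> nat \<Rightarrow> 'a"
  assumes f: "affine_map m n f" and g: "affine_map m n g"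
  shows "affine_map m n (\<lambda>x i. f x i + g x i)"
proof -
  obtain M b where Mb: "\<forall>x\<in>fvec m. f x = (\<lambda>i. if i < n then b i + (\<Sum>j<m. M i j * x j) else 0)"
    using f unfolding affine_map_def by blast
  obtain M' b' where Mb': "\<forall>x\<in>fvec m. g x = (\<lambda>i. if i < n then b' i + (\<Sum>j<m. M' i j * x j) else 0)"
    using g unfolding affine_map_def by blast
  show ?thesis
    by (rule am_intro[where b = "\<lambda>i. b i + b' i" and M = "\<lambda>i j. M i j + M' i j"])
       (use Mb Mb' in \<open>auto simp: distrib_right sum.distrib algebra_simps\<close>)
qed

lemma am_diff:
  fixes f :: "(nat \<Rightarrow> 'a::comm_ring_1) \<Rightarrow> nat \<Rightarrow> 'a"
  assumes f: "affine_map m n f" and g: "affine_map m n g"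
  shows "affine_map m n (\<lambda>x i. f x i - g x i)"
proof -
  obtain M b where Mb: "\<forall>x\<in>fvec m. f x = (\<lambda>i. if i < n then b i + (\<Sum>j<m. M i j * x j) else 0)"
    using f unfolding affine_map_def by blast
  obtain M' b' where Mb': "\<forall>x\<in>fvec m. g x = (\<lambda>i. if i < n then b' i + (\<Sum>j<m. M' i j * x j) else 0)"
    using g unfolding affine_map_def by blast
  show ?thesis
    by (rule am_intro[where b = "\<lambda>i. b i - b' i" and M = "\<lambda>i j. M i j - M' i j"])
       (use Mb Mb' in \<open>auto simp: left_diff_distrib sum_subtractf algebra_simps\<close>)
qed

lemma am_const: "c \<in> fvec n \<Longrightarrow> affine_map m n (\<lambda>_. c)"
  by (rule am_intro[where b = c and M = "\<lambda>_ _. 0"]) (auto simp: fvec_def)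

lemma am_select:
  assumes "\<And>i. i < n \<Longrightarrow> P i \<Longrightarrow> \<sigma> i < m"
  shows "affine_map m n (\<lambda>z i. if i < n then c i + (if P i then z (\<sigma> i) else 0) else 0)"
proof (rule am_intro[where b = c and M = "\<lambda>i j. if P i \<and> j = \<sigma> i then 1 else 0"])
  fix x :: "nat \<Rightarrow> 'a"
  show "(\<lambda>i. if i < n then c i + (if P i then x (\<sigma> i) else 0) else 0) =
    (\<lambda>i. if i < n then c i + (\<Sum>j<m. (if P i \<and> j = \<sigma> i then 1 else 0) * x j) else 0)"
  proof (rule ext)
    fix i
    show "(if i < n then c i + (if P i then x (\<sigma> i) else 0) else 0) =
      (if i < n then c i + (\<Sum>j<m. (if P i \<and> j = \<sigma> i then 1 else 0) * x j) else 0)"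
      using assms[of i] by (cases "i < n \<and> P i") (auto simp: if_distrib[of "\<lambda>a. a * _"] cong: if_cong)
  qed
qed

lemma am_id: "affine_map n n (\<lambda>x. x)"
proof -
  have "affine_map n n (\<lambda>z i. if i < n then 0 + (if True then z (id i) else 0) else 0)"
    by (rule am_select) auto
  then show ?thesis by (rule am_cong) (auto simp: fvec_def)
qed

lemma am_join:
  fixes f :: "(nat \<Rightarrow> 'a::comm_ring_1) \<Rightarrow> nat \<Rightarrow> 'a"
  assumes f: "affine_map k m f" and g: "affine_map k kk g"
  shows "affine_map k (m + kk) (\<lambda>z i. if i < m then f z i else g z (i - m))"
proof -
  obtain M b where Mb: "\<forall>x\<in>fvec k. f x = (\<lambda>i. if i < m then b i + (\<Sum>j<k. M i j * x j) else 0)"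
    using f unfolding affine_map_def by blast
  obtain M' b' where Mb': "\<forall>x\<in>fvec k. g x = (\<lambda>i. if i < kk then b' i + (\<Sum>j<k. M' i j * x j) else 0)"
    using g unfolding affine_map_def by blast
  show ?thesis
    by (rule am_intro[where b = "\<lambda>i. if i < m then b i else b' (i - m)" and M = "\<lambda>i j. if i < m then M i j else M' (i - m) j"])
       (use Mb Mb' in \<open>auto simp: fun_eq_iff\<close>)
qed


lemma aff_comb:
  fixes h :: "(nat \<Rightarrow> 'a::comm_ring_1) \<Rightarrow> nat \<Rightarrow> 'a"
  assumes h: "affine_map m n h" and I: "finite I" and v: "\<forall>x\<in>I. v x \<in> fvec m"
    and l: "(\<Sum>x\<in>I. l x) = 1"
  shows "h (\<lambda>j. \<Sum>x\<in>I. l x * v x j) = (\<lambda>i. \<Sum>x\<in>I. l x * h (v x) i)"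
proof -
  obtain M b where Mb: "\<forall>x\<in>fvec m. h x = (\<lambda>i. if i < n then b i + (\<Sum>j<m. M i j * x j) else 0)"
    using h unfolding affine_map_def by blast
  have c: "(\<lambda>j. \<Sum>x\<in>I. l x * v x j) \<in> fvec m"
    using v by (auto simp: fvec_def)
  show ?thesis
  proof (rule ext)
    fix i
    show "h (\<lambda>j. \<Sum>x\<in>I. l x * v x j) i = (\<Sum>x\<in>I. l x * h (v x) i)"
    proof (cases "i < n")
      case True
      have "h (\<lambda>j. \<Sum>x\<in>I. l x * v x j) i = b i + (\<Sum>j<m. M i j * (\<Sum>x\<in>I. l x * v x j))"
        using Mb c True by simp
      also have "\<dots> = (\<Sum>x\<in>I. l x) * b i + (\<Sum>x\<in>I. \<Sum>j<m. l x * (M i j * v x j))"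
        using l by (simp add: sum_distrib_left sum.swap[of _ I] algebra_simps)
      also have "\<dots> = (\<Sum>x\<in>I. l x * (b i + (\<Sum>j<m. M i j * v x j)))"
        by (simp add: sum_distrib_left sum_distrib_right sum.distrib distrib_left)
      also have "\<dots> = (\<Sum>x\<in>I. l x * h (v x) i)"
        by (rule sum.cong) (use Mb v True in auto)
      finally show ?thesis .
    next
      case False
      then show ?thesis using Mb v c by simp
    qed
  qed
qed

definition lc :: "('b \<Rightarrow> 'a::comm_ring_1) \<Rightarrow> ('b \<Rightarrow> nat \<Rightarrow> 'a) \<Rightarrow> 'b set \<Rightarrow> nat \<Rightarrow> 'a" where
  "lc c d I = (\<lambda>i. \<Sum>x\<in>I. c x * d x i)"

definition spn :: "('b \<Rightarrow> nat \<Rightarrow> 'a::comm_ring_1) \<Rightarrow> 'b set \<Rightarrow> (nat \<Rightarrow> 'a) set" where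
  "spn d I = {lc c d I | c. True}"

definition lin_indep :: "('b \<Rightarrow> nat \<Rightarrow> 'a::comm_ring_1) \<Rightarrow> 'b set \<Rightarrow> bool" where
  "lin_indep d I \<longleftrightarrow> (\<forall>c. (\<forall>i. (\<Sum>x\<in>I. c x * d x i) = 0) \<longrightarrow> (\<forall>x\<in>I. c x = 0))"

lemma spn_fvec: "\<forall>x\<in>I. d x \<in> fvec n \<Longrightarrow> u \<in> spn d I \<Longrightarrow> u \<in> fvec n"
  by (auto simp: spn_def lc_def fvec_def)

lemma spn_base: "finite I \<Longrightarrow> x \<in> I \<Longrightarrow> d x \<in> spn d I"
  unfolding spn_def lc_def
  by (rule CollectI, rule exI[of _ "\<lambda>y. if y = x then 1 else 0"])
     (auto simp: if_distrib[of "\<lambda>a. a * _"] cong: if_cong)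

lemma spn_zero: "(\<lambda>_. 0) \<in> spn d I"
  unfolding spn_def lc_def by (rule CollectI, rule exI[of _ "\<lambda>_. 0"]) auto

lemma spn_diff: "u \<in> spn d I \<Longrightarrow> u' \<in> spn d I \<Longrightarrow> (\<lambda>i. u i - u' i) \<in> spn d I"
proof -
  assume "u \<in> spn d I" "u' \<in> spn d I"
  then obtain c c' where "u = lc c d I" "u' = lc c' d I" by (auto simp: spn_def)
  then have "(\<lambda>i. u i - u' i) = lc (\<lambda>x. c x - c' x) d I"
    by (simp add: lc_def left_diff_distrib sum_subtractf)
  then show ?thesis by (auto simp: spn_def)
qed

lemma spn_add: "u \<in> spn d I \<Longrightarrow> u' \<in> spn d I \<Longrightarrow> (\<lambda>i. u i + u' i) \<in> spn d I"
proof -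
  assume "u \<in> spn d I" "u' \<in> spn d I"
  then obtain c c' where "u = lc c d I" "u' = lc c' d I" by (auto simp: spn_def)
  then have "(\<lambda>i. u i + u' i) = lc (\<lambda>x. c x + c' x) d I"
    by (simp add: lc_def distrib_right sum.distrib)
  then show ?thesis by (auto simp: spn_def)
qed

lemma spn_scale: "u \<in> spn d I \<Longrightarrow> (\<lambda>i. a * u i) \<in> spn d I"
proof -
  assume "u \<in> spn d I"
  then obtain c where "u = lc c d I" by (auto simp: spn_def)
  then have "(\<lambda>i. a * u i) = lc (\<lambda>x. a * c x) d I"
    by (simp add: lc_def sum_distrib_left mult.assoc)
  then show ?thesis by (auto simp: spn_def)
qed

lemma spn_lincomb:
  assumes "finite J" "\<forall>j\<in>J. w j \<in> spn d I"
  shows "(\<lambda>i. \<Sum>j\<in>J. a j * w j i) \<in> spn d I"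
  using assms
proof (induction J rule: finite_induct)
  case empty
  then show ?case using spn_zero by simp
next
  case (insert x F)
  have "(\<lambda>i. a x * w x i + (\<Sum>j\<in>F. a j * w j i)) \<in> spn d I"
    by (rule spn_add) (use insert spn_scale in auto)
  then show ?case using insert by simp
qed

lemma spn_mono:
  assumes "finite I'" "I \<subseteq> I'"
  shows "spn d I \<subseteq> spn d I'"
proof
  fix u assume "u \<in> spn d I"
  then obtain c where u: "u = lc c d I" by (auto simp: spn_def)
  have "u = lc (\<lambda>x. if x \<in> I then c x else 0) d I'"
    unfolding u lc_def
  proof (rule ext)
    fix i
    have "(\<Sum>x\<in>I'. (if x \<in> I then c x else 0) * d x i) = (\<Sum>x\<in>I. (if x \<in> I then c x else 0) * d x i)"
      by (rule sum.mono_neutral_right) (use assms in auto)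
    then show "(\<Sum>x\<in>I. c x * d x i) = (\<Sum>x\<in>I'. (if x \<in> I then c x else 0) * d x i)" by simp
  qed
  then show "u \<in> spn d I'" by (auto simp: spn_def)
qed

lemma lin_indep_insert: "finite I \<Longrightarrow> a \<notin> I \<Longrightarrow> lin_indep d (insert a I) \<Longrightarrow> lin_indep d I"
  unfolding lin_indep_def
proof (intro allI impI ballI)
  fix c x
  assume fin: "finite I" and a: "a \<notin> I"
    and H: "\<forall>c. (\<forall>i. (\<Sum>x\<in>insert a I. c x * d x i) = 0) \<longrightarrow> (\<forall>x\<in>insert a I. c x = 0)"
    and c: "\<forall>i. (\<Sum>x\<in>I. c x * d x i) = 0" and x: "x \<in> I"
  have "\<forall>i. (\<Sum>y\<in>insert a I. (c(a := 0)) y * d y i) = 0"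
  proof
    fix i
    have "(\<Sum>y\<in>I. (c(a := 0)) y * d y i) = (\<Sum>y\<in>I. c y * d y i)"
      by (rule sum.cong) (use a in auto)
    then show "(\<Sum>y\<in>insert a I. (c(a := 0)) y * d y i) = 0" using fin a c by simp
  qed
  then have "(c(a := 0)) x = 0" using H x by blast
  then show "c x = 0" using x a by (auto split: if_splits)
qed


lemma spn_empty: "spn d {} = {(\<lambda>_. 0)}"
  by (auto simp: spn_def lc_def)

lemma GE:
  fixes d :: "'b \<Rightarrow> nat \<Rightarrow> 'a::field"
  assumes "finite I" "\<forall>x\<in>I. d x \<in> fvec n" "lin_indep d I"
  shows "\<exists>J w. J \<subseteq> {..<n} \<and> card J = card I \<and>
     (\<forall>j\<in>J. w j \<in> spn d I \<and> (\<forall>j'\<in>J. w j j' = (if j' = j then 1 else 0))) \<and>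
     (\<forall>u\<in>spn d I. (\<forall>j\<in>J. u j = 0) \<longrightarrow> u = (\<lambda>_. 0))"
  using assms
proof (induction I rule: finite_induct)
  case empty
  show ?case by (rule exI[of _ "{}"]) (auto simp: spn_empty)
next
  case (insert a I)
  have indI: "lin_indep d I" using lin_indep_insert[OF insert.hyps(1,2) insert.prems(2)] .
  obtain J w where J: "J \<subseteq> {..<n}" "card J = card I"
    and w: "\<forall>j\<in>J. w j \<in> spn d I \<and> (\<forall>j'\<in>J. w j j' = (if j' = j then 1 else 0))"
    and inj: "\<forall>u\<in>spn d I. (\<forall>j\<in>J. u j = 0) \<longrightarrow> u = (\<lambda>_. 0)"
    using insert.IH[OF _ indI] insert.prems(1) by auto
  have finJ: "finite J" using J(1) finite_subset by blast
  have finI': "finite (insert a I)" using insert.hyps by simp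
  have spnmono: "spn d I \<subseteq> spn d (insert a I)" by (rule spn_mono) (use insert.hyps in auto)
  define u where "u = (\<lambda>i. d a i - (\<Sum>j\<in>J. d a j * w j i))"
  have sI: "(\<lambda>i. \<Sum>j\<in>J. d a j * w j i) \<in> spn d I"
    by (rule spn_lincomb) (use finJ w in auto)
  have uspn: "u \<in> spn d (insert a I)"
    unfolding u_def by (rule spn_diff) (use spn_base[OF finI' insertI1] sI spnmono in auto)
  have ufv: "u \<in> fvec n" by (rule spn_fvec[OF _ uspn]) (use insert.prems in auto)
  have uJ: "\<forall>j\<in>J. u j = 0"
  proof
    fix j assume j: "j \<in> J"
    have "(\<Sum>j'\<in>J. d a j' * w j' j) = (\<Sum>j'\<in>J. if j' = j then d a j' else 0)"
      by (rule sum.cong) (use w j in auto)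
    also have "\<dots> = d a j" using j finJ by simp
    finally show "u j = 0" by (simp add: u_def)
  qed
  have "\<exists>k. u k \<noteq> 0"
  proof (rule ccontr)
    assume "\<not> (\<exists>k. u k \<noteq> 0)"
    then have "\<And>i. u i = 0" by blast
    then have u0: "\<And>i. d a i = (\<Sum>j\<in>J. d a j * w j i)" unfolding u_def by (metis right_minus_eq)
    obtain c where c: "(\<lambda>i. \<Sum>j\<in>J. d a j * w j i) = lc c d I" using sI by (auto simp: spn_def)
    have L: "\<And>c. (\<forall>i. (\<Sum>x\<in>insert a I. c x * d x i) = 0) \<Longrightarrow> (\<forall>x\<in>insert a I. c x = 0)"
      using insert.prems(2) unfolding lin_indep_def by blast
    have "\<forall>i. (\<Sum>x\<in>insert a I. (c(a := -1)) x * d x i) = 0"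
    proof
      fix i
      have "(\<Sum>x\<in>I. (c(a := -1)) x * d x i) = (\<Sum>x\<in>I. c x * d x i)"
        by (rule sum.cong) (use insert.hyps in auto)
      also have "\<dots> = d a i" using c u0[of i] unfolding lc_def by metis
      finally show "(\<Sum>x\<in>insert a I. (c(a := -1)) x * d x i) = 0" using insert.hyps by simp
    qed
    then have "(c(a := -1)) a = 0" using L[of "c(a := -1)"] by blast
    then show False by simp
  qed
  then obtain k where k: "u k \<noteq> 0" by blast
  have kn: "k < n" using k ufv by (meson fvecD not_le)
  have kJ: "k \<notin> J" using k uJ by blast
  define w' where "w' = (\<lambda>j. if j = k then (\<lambda>i. u i / u k) else (\<lambda>i. w j i - w j k * (u i / u k)))"
  have us: "(\<lambda>i. u i / u k) \<in> spn d (insert a I)"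
    using spn_scale[OF uspn, of "inverse (u k)"] by (simp add: field_simps)
  show ?case
  proof (intro exI[of _ "insert k J"] exI[of _ w'] conjI)
    show "insert k J \<subseteq> {..<n}" using J kn by auto
    show "card (insert k J) = card (insert a I)" using J finJ kJ insert.hyps by simp
    show "\<forall>j\<in>insert k J. w' j \<in> spn d (insert a I) \<and> (\<forall>j'\<in>insert k J. w' j j' = (if j' = j then 1 else 0))"
    proof
      fix j assume j: "j \<in> insert k J"
      show "w' j \<in> spn d (insert a I) \<and> (\<forall>j'\<in>insert k J. w' j j' = (if j' = j then 1 else 0))"
      proof (cases "j = k")
        case True
        then show ?thesis using us k uJ by (auto simp: w'_def)
      next
        case False
        then have jJ: "j \<in> J" using j by auto
        have ws: "w j \<in> spn d (insert a I)" using w jJ spnmono by blast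
        have "(\<lambda>i. w j i - w j k * (u i / u k)) \<in> spn d (insert a I)"
          by (rule spn_diff[OF ws], rule spn_scale[OF us])
        then have "w' j \<in> spn d (insert a I)"
          using False by (simp add: w'_def)
        moreover have "\<forall>j'\<in>insert k J. w' j j' = (if j' = j then 1 else 0)"
          using False jJ w k uJ kJ by (auto simp: w'_def)
        ultimately show ?thesis by blast
      qed
    qed
    show "\<forall>v\<in>spn d (insert a I). (\<forall>j\<in>insert k J. v j = 0) \<longrightarrow> v = (\<lambda>_. 0)"
    proof (intro ballI impI)
      fix v assume v: "v \<in> spn d (insert a I)" and vJ: "\<forall>j\<in>insert k J. v j = 0"
      obtain c where c: "v = lc c d (insert a I)" using v by (auto simp: spn_def)
      define y where "y = (\<lambda>i. c a * (\<Sum>j\<in>J. d a j * w j i) + (\<Sum>x\<in>I. c x * d x i))"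
      have yspn: "y \<in> spn d I"
        unfolding y_def
        by (rule spn_add, rule spn_scale[OF sI]) (auto simp: spn_def lc_def)
      have vy: "\<And>i. v i = c a * u i + y i"
        using insert.hyps by (simp add: c lc_def y_def u_def algebra_simps)
      have "\<forall>j\<in>J. y j = 0" using vJ uJ vy by (metis add_0 insertCI mult_zero_right)
      then have y0: "y = (\<lambda>_. 0)" using inj yspn by blast
      have "c a * u k = 0" using vJ vy y0 by (metis add_0_right insertI1)
      then have "c a = 0" using k by simp
      then show "v = (\<lambda>_. 0)" using vy y0 by (simp add: fun_eq_iff)
    qed
  qed
qed


lemma fvec_finite_card:
  shows "finite (fvec n :: (nat \<Rightarrow> 'a::{finite,zero}) set)"
    and "card (fvec n :: (nat \<Rightarrow> 'a::{finite,zero}) set) \<le> card (UNIV :: 'a set) ^ n"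
proof -
  let ?P = "PiE {..<n} (\<lambda>_. UNIV :: 'a set)"
  have inj: "inj_on (\<lambda>x. restrict x {..<n}) (fvec n :: (nat \<Rightarrow> 'a) set)"
  proof (rule inj_onI)
    fix x y :: "nat \<Rightarrow> 'a" assume "x \<in> fvec n" "y \<in> fvec n" "restrict x {..<n} = restrict y {..<n}"
    note h = this
    show "x = y"
    proof (rule ext)
      fix i
      show "x i = y i"
      proof (cases "i < n")
        case True
        then show ?thesis using fun_cong[OF h(3), of i] by simp
      next
        case False
        then show ?thesis using fvecD[OF h(1)] fvecD[OF h(2)] by simp
      qed
    qed
  qed
  have sub: "(\<lambda>x. restrict x {..<n}) ` (fvec n :: (nat \<Rightarrow> 'a) set) \<subseteq> ?P" by (simp add: image_subset_iff)
  have finP: "finite ?P" by (rule finite_PiE) auto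
  show "finite (fvec n :: (nat \<Rightarrow> 'a::{finite,zero}) set)"
    using inj_on_finite[OF inj sub finP] .
  have "card (fvec n :: (nat \<Rightarrow> 'a) set) \<le> card ?P"
    using card_inj_on_le[OF inj sub finP] .
  also have "card ?P = card (UNIV :: 'a set) ^ n" by (simp add: card_PiE)
  finally show "card (fvec n :: (nat \<Rightarrow> 'a::{finite,zero}) set) \<le> card (UNIV :: 'a set) ^ n" .
qed

lemma rank_facts:
  fixes B :: "(nat \<Rightarrow> 'a::{finite,field}) set"
  assumes "B \<subseteq> fvec m"
  shows "finite B"
    and "\<exists>S. S \<subseteq> B \<and> finite S \<and> aff_indep S \<and> card S = rank_aff B"
    and "\<And>S. S \<subseteq> B \<Longrightarrow> aff_indep S \<Longrightarrow> card S \<le> rank_aff B"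
proof -
  show finB: "finite B" using assms fvec_finite_card(1) finite_subset by blast
  let ?X = "{card S | S. S \<subseteq> B \<and> finite S \<and> aff_indep S}"
  have finX: "finite ?X"
  proof (rule finite_subset)
    show "?X \<subseteq> {..card B}" using card_mono[OF finB] by auto
  qed auto
  have "0 \<in> ?X" by (auto intro!: exI[of _ "{}"] simp: aff_indep_def)
  then have ne: "?X \<noteq> {}" by blast
  have "rank_aff B \<in> ?X" unfolding rank_aff_def using Max_in[OF finX ne] .
  then show "\<exists>S. S \<subseteq> B \<and> finite S \<and> aff_indep S \<and> card S = rank_aff B" by auto
  fix S assume "S \<subseteq> B" "aff_indep S"
  then have "card S \<in> ?X" using finB finite_subset by blast
  then show "card S \<le> rank_aff B" unfolding rank_aff_def using Max_ge[OF finX] by blast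
qed

lemma hull_lemma:
  fixes B :: "(nat \<Rightarrow> 'a::{finite,field}) set"
  assumes B: "B \<subseteq> fvec m" and S: "S \<subseteq> B" "finite S" "aff_indep S" "card S = rank_aff B"
    and b: "b \<in> B"
  shows "\<exists>l. (\<Sum>x\<in>S. l x) = 1 \<and> b = (\<lambda>j. \<Sum>x\<in>S. l x * x j)"
proof (cases "b \<in> S")
  case True
  have e1: "(\<Sum>x\<in>S. (if x = b then 1 else 0)) = (1::'a)" using True S(2) by simp
  have e2: "(\<Sum>x\<in>S. (if x = b then 1 else 0) * x j) = b j" for j
  proof -
    have "(\<Sum>x\<in>S. (if x = b then 1 else 0) * x j) = (\<Sum>x\<in>S. if x = b then b j else 0)"
      by (rule sum.cong) auto
    also have "\<dots> = b j" using True S(2) by simp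
    finally show ?thesis .
  qed
  show ?thesis
    by (rule exI[of _ "\<lambda>x. if x = b then 1 else 0"]) (use e1 e2 in auto)
next
  case False
  have "card (insert b S) = rank_aff B + 1" using False S by simp
  then have "\<not> aff_indep (insert b S)"
    using rank_facts(3)[OF B, of "insert b S"] S b by auto
  then obtain c where c1: "(\<Sum>x\<in>insert b S. c x) = 0" and c2: "\<forall>i. (\<Sum>x\<in>insert b S. c x * x i) = 0"
    and c3: "\<exists>x\<in>insert b S. c x \<noteq> 0"
    unfolding aff_indep_def by blast
  have cb: "c b \<noteq> 0"
  proof
    assume cb0: "c b = 0"
    have "(\<Sum>x\<in>S. c x) = 0" using c1 cb0 S(2) False by simp
    moreover have "\<forall>i. (\<Sum>x\<in>S. c x * x i) = 0" using c2 cb0 S(2) False by simp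
    ultimately have "\<forall>x\<in>S. c x = 0" using S(3) unfolding aff_indep_def by blast
    then show False using c3 cb0 by auto
  qed
  show ?thesis
  proof (rule exI[of _ "\<lambda>x. - c x / c b"], intro conjI)
    have "(\<Sum>x\<in>S. c x) = - c b" using c1 S(2) False by (simp add: add_eq_0_iff)
    then show "(\<Sum>x\<in>S. - c x / c b) = 1" using cb
      by (simp add: sum_divide_distrib[symmetric] sum_negf)
    show "b = (\<lambda>j. \<Sum>x\<in>S. - c x / c b * x j)"
    proof (rule ext)
      fix j
      have "c b * b j + (\<Sum>x\<in>S. c x * x j) = 0" using c2 S(2) False by simp
      then have "(\<Sum>x\<in>S. c x * x j) = - (c b * b j)" by (simp add: add_eq_0_iff)
      then have "(\<Sum>x\<in>S. - c x / c b * x j) = b j" using cb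
        by (simp add: sum_divide_distrib[symmetric] sum_negf)
      then show "b j = (\<Sum>x\<in>S. - c x / c b * x j)" by simp
    qed
  qed
qed

lemma hom_unique:
  fixes B :: "(nat \<Rightarrow> 'a::comm_ring_1) set"
  assumes B: "B \<subseteq> fvec m" and S: "S \<subseteq> B" "finite S"
    and HS: "\<forall>b\<in>B. \<exists>l. (\<Sum>x\<in>S. l x) = 1 \<and> b = (\<lambda>j. \<Sum>x\<in>S. l x * x j)"
    and \<phi>: "affine_hom m n B \<phi>" and \<psi>: "affine_hom m n B \<psi>"
    and eq: "\<forall>x\<in>S. \<phi> x = \<psi> x" and b: "b \<in> B"
  shows "\<phi> b = \<psi> b"
proof -
  obtain f where f: "affine_map m n f" "\<forall>x\<in>B. \<phi> x = f x" using \<phi> unfolding affine_hom_def by blast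
  obtain g where g: "affine_map m n g" "\<forall>x\<in>B. \<psi> x = g x" using \<psi> unfolding affine_hom_def by blast
  obtain l where l: "(\<Sum>x\<in>S. l x) = 1" "b = (\<lambda>j. \<Sum>x\<in>S. l x * x j)" using HS b by blast
  have Sf: "\<forall>x\<in>S. x \<in> fvec m" using S B by auto
  have "\<phi> b = f b" using f b by auto
  also have "\<dots> = (\<lambda>i. \<Sum>x\<in>S. l x * f x i)"
    using aff_comb[OF f(1) S(2) Sf l(1)] l(2) by simp
  also have "\<dots> = (\<lambda>i. \<Sum>x\<in>S. l x * g x i)"
  proof (rule ext, rule sum.cong)
    fix i x
    assume xS: "x \<in> S"
    then have xB: "x \<in> B" using S by blast
    have "f x = g x" using f(2) g(2) eq xS xB by metis
    then show "l x * f x i = l x * g x i" by simp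
  qed simp
  also have "\<dots> = g b"
    using aff_comb[OF g(1) S(2) Sf l(1)] l(2) by simp
  also have "\<dots> = \<psi> b" using g b by auto
  finally show ?thesis .
qed


lemma copy_construct:
  fixes \<phi>0 f0 R E K :: "(nat \<Rightarrow> 'a::comm_ring_1) \<Rightarrow> nat \<Rightarrow> 'a"
  assumes B: "B \<subseteq> fvec m" and F: "F \<subseteq> fvec kk"
   and f0: "affine_map m n f0" "\<forall>b\<in>B. \<phi>0 b = f0 b"
   and R: "affine_map n m R" "\<forall>b\<in>B. R (\<phi>0 b) = b" "\<forall>z z'. (\<forall>j\<in>J. z j = z' j) \<longrightarrow> R z = R z'"
   and E: "affine_map n' n E" "\<forall>u j. j \<in> J \<longrightarrow> E u j = E (\<lambda>_. 0) j"
   and K: "affine_map n n' K" "\<forall>u\<in>fvec n'. K (E u) = u"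
   and \<psi>: "nondeg_hom kk n' F C \<psi>"
   and inA: "\<forall>b\<in>B. \<forall>y\<in>F. (\<lambda>i. \<phi>0 b i + E (\<psi> y) i) \<in> A"
  shows "affine_copy (m + kk) n (snd (conf_prod m B (kk, F))) A"
proof -
  define P where "P = snd (conf_prod m B (kk, F))"
  have P: "P = {(\<lambda>i. if i < m then x i else y (i - m)) | x y. x \<in> B \<and> y \<in> F}"
    by (simp add: P_def conf_prod_def)
  obtain h\<psi> where h\<psi>: "affine_map kk n' h\<psi>" "\<forall>y\<in>F. \<psi> y = h\<psi> y"
    using \<psi> unfolding nondeg_hom_def affine_hom_def by blast
  obtain hi where hi: "affine_map n' kk hi" "\<forall>u\<in>\<psi> ` F. the_inv_into F \<psi> u = hi u"
    using \<psi> unfolding nondeg_hom_def affine_hom_def by blast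
  have injpsi: "inj_on \<psi> F" using \<psi> unfolding nondeg_hom_def by blast
  define s1 where "s1 = (\<lambda>z::nat \<Rightarrow> 'a. \<lambda>i. if i < m then z i else 0)"
  define s2 where "s2 = (\<lambda>z::nat \<Rightarrow> 'a. \<lambda>i. if i < kk then z (i + m) else 0)"
  have s1a: "affine_map (m + kk) m s1"
  proof -
    have "affine_map (m + kk) m (\<lambda>z i. if i < m then 0 + (if True then z (id i) else 0) else 0)"
      by (rule am_select) auto
    then show ?thesis by (rule am_cong) (simp add: s1_def fun_eq_iff)
  qed
  have s2a: "affine_map (m + kk) kk s2"
  proof -
    have "affine_map (m + kk) kk (\<lambda>z i. if i < kk then 0 + (if True then z (i + m) else 0) else 0)"
      by (rule am_select) auto
    then show ?thesis by (rule am_cong) (simp add: s2_def fun_eq_iff)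
  qed
  define E0 where "E0 = E (\<lambda>_. 0)"
  have E0f: "E0 \<in> fvec n" unfolding E0_def by (rule am_fvec[OF E(1)]) (simp add: fvec_def)
  define X where "X = (\<lambda>z. R (\<lambda>i. z i - E0 i))"
  define Y where "Y = (\<lambda>z. hi (K (\<lambda>i. z i - f0 (X z) i)))"
  define \<Phi> where "\<Phi> = (\<lambda>z i. \<phi>0 (s1 z) i + E (\<psi> (s2 z)) i)"
  define \<Psi> where "\<Psi> = (\<lambda>z i. if i < m then X z i else Y z (i - m))"
  have Xa: "affine_map n m X"
    unfolding X_def by (rule am_comp[OF am_diff[OF am_id am_const[OF E0f]] R(1)])
  have Ya: "affine_map n kk Y"
    unfolding Y_def
    by (rule am_comp[OF am_comp[OF am_diff[OF am_id am_comp[OF Xa f0(1)]] K(1)] hi(1)])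
  have \<Psi>a: "affine_map n (m + kk) \<Psi>"
    unfolding \<Psi>_def by (rule am_join[OF Xa Ya])
  have \<Phi>a: "affine_map (m + kk) n (\<lambda>z i. f0 (s1 z) i + E (h\<psi> (s2 z)) i)"
    by (rule am_add[OF am_comp[OF s1a f0(1)] am_comp[OF am_comp[OF s2a h\<psi>(1)] E(1)]])
  have key: "\<Psi> (\<Phi> z) = z \<and> \<Phi> z \<in> A \<and> \<Phi> z = (\<lambda>i. f0 (s1 z) i + E (h\<psi> (s2 z)) i)" if z: "z \<in> P" for z
  proof -
    obtain x y where xy: "z = (\<lambda>i. if i < m then x i else y (i - m))" "x \<in> B" "y \<in> F"
      using z P by blast
    have xf: "x \<in> fvec m" using xy B by blast
    have yf: "y \<in> fvec kk" using xy F by blast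
    have s1z: "s1 z = x" using xf by (auto simp: s1_def xy(1) fun_eq_iff fvec_def)
    have s2z: "s2 z = y" using yf by (auto simp: s2_def xy(1) fun_eq_iff fvec_def)
    have \<Phi>z: "\<Phi> z = (\<lambda>i. \<phi>0 x i + E (\<psi> y) i)" by (simp add: \<Phi>_def s1z s2z)
    have "\<psi> y = h\<psi> y" using h\<psi>(2) xy(3) by blast
    then have \<psi>y: "\<psi> y \<in> fvec n'" using am_fvec[OF h\<psi>(1) yf] by simp
    have "X (\<Phi> z) = R (\<phi>0 x)"
      unfolding X_def \<Phi>z
    proof (rule R(3)[rule_format])
      fix j assume j: "j \<in> J"
      have "E (\<psi> y) j = E0 j" using E(2) j unfolding E0_def by blast
      then show "(\<lambda>i. \<phi>0 x i + E (\<psi> y) i - E0 i) j = \<phi>0 x j" by simp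
    qed
    then have Xz: "X (\<Phi> z) = x" using R(2) xy(2) by simp
    have fX: "f0 (X (\<Phi> z)) = \<phi>0 x" using Xz f0(2) xy(2) by simp
    have "(\<lambda>i. \<Phi> z i - f0 (X (\<Phi> z)) i) = E (\<psi> y)"
      unfolding fX by (simp add: \<Phi>z)
    then have "Y (\<Phi> z) = hi (\<psi> y)" using K(2) \<psi>y by (simp add: Y_def)
    also have "\<dots> = the_inv_into F \<psi> (\<psi> y)" using hi(2) xy(3) by simp
    also have "\<dots> = y" using the_inv_into_f_f[OF injpsi xy(3)] .
    finally have Yz: "Y (\<Phi> z) = y" .
    have "\<Psi> (\<Phi> z) = z" unfolding \<Psi>_def Xz Yz by (simp add: xy(1))
    moreover have "\<Phi> z \<in> A" using inA xy \<Phi>z by simp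
    moreover have "\<Phi> z = (\<lambda>i. f0 (s1 z) i + E (h\<psi> (s2 z)) i)"
      unfolding \<Phi>_def s1z s2z using f0(2) h\<psi>(2) xy(2,3) by simp
    ultimately show ?thesis by blast
  qed
  have inj: "inj_on \<Phi> P" by (rule inj_on_inverseI[of _ \<Psi>]) (use key in blast)
  have "nondeg_hom (m + kk) n P A \<Phi>"
    unfolding nondeg_hom_def
  proof (intro conjI)
    show "\<forall>x\<in>P. \<Phi> x \<in> A" using key by blast
    show "affine_hom (m + kk) n P \<Phi>" unfolding affine_hom_def using \<Phi>a key by blast
    show "inj_on \<Phi> P" by (rule inj)
    show "affine_hom n (m + kk) (\<Phi> ` P) (the_inv_into P \<Phi>)"
      unfolding affine_hom_def
    proof (intro exI conjI)
      show "affine_map n (m + kk) \<Psi>" by (rule \<Psi>a)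
      show "\<forall>x\<in>\<Phi> ` P. the_inv_into P \<Phi> x = \<Psi> x"
      proof
        fix u assume "u \<in> \<Phi> ` P"
        then obtain z where z: "z \<in> P" "u = \<Phi> z" by blast
        have e1: "\<Psi> (\<Phi> z) = z" using key[OF z(1)] by blast
        show "the_inv_into P \<Phi> u = \<Psi> u"
          by (simp only: z(2) the_inv_into_f_f[OF inj z(1)] e1)
      qed
    qed
  qed
  then show ?thesis unfolding affine_copy_def P_def by blast
qed


lemma get_JR:
  fixes B :: "(nat \<Rightarrow> 'a::{finite,field}) set" and \<phi>0 :: "(nat \<Rightarrow> 'a) \<Rightarrow> nat \<Rightarrow> 'a"
  assumes B: "B \<subseteq> fvec m" and S: "S \<subseteq> B" "finite S" "aff_indep S" and b1: "b1 \<in> S"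
   and HS: "\<forall>b\<in>B. \<exists>l. (\<Sum>x\<in>S. l x) = 1 \<and> b = (\<lambda>j. \<Sum>x\<in>S. l x * x j)"
   and \<phi>: "nondeg_hom m n B A0 \<phi>0"
  shows "\<exists>J R. J \<subseteq> {..<n} \<and> card J = card S - 1 \<and> affine_map n m R \<and> (\<forall>b\<in>B. R (\<phi>0 b) = b)
     \<and> (\<forall>z z'. (\<forall>j\<in>J. z j = z' j) \<longrightarrow> R z = R z')"
proof -
  obtain f0 where f0: "affine_map m n f0" "\<forall>b\<in>B. \<phi>0 b = f0 b"
    using \<phi> unfolding nondeg_hom_def affine_hom_def by blast
  obtain g0 where g0: "affine_map n m g0" "\<forall>u\<in>\<phi>0 ` B. the_inv_into B \<phi>0 u = g0 u"
    using \<phi> unfolding nondeg_hom_def affine_hom_def by blast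
  have inj: "inj_on \<phi>0 B" using \<phi> unfolding nondeg_hom_def by blast
  have g0\<phi>: "g0 (\<phi>0 b) = b" if "b \<in> B" for b
    using g0(2) the_inv_into_f_f[OF inj that] that by force
  have \<phi>f: "\<phi>0 b \<in> fvec n" if "b \<in> B" for b
    using f0 that am_fvec B by (metis subsetD)
  define p where "p = \<phi>0 b1"
  define S' where "S' = S - {b1}"
  define d where "d = (\<lambda>x i. \<phi>0 x i - p i)"
  have SS': "S = insert b1 S'" "b1 \<notin> S'" "finite S'" using b1 S(2) by (auto simp: S'_def)
  have b1B: "b1 \<in> B" using b1 S by blast
  have pf: "p \<in> fvec n" using \<phi>f b1B by (simp add: p_def)
  have df: "\<forall>x\<in>S'. d x \<in> fvec n"
    using \<phi>f pf S unfolding d_def S'_def fvec_def by auto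
  have indep: "lin_indep d S'"
    unfolding lin_indep_def
  proof (intro allI impI ballI)
    fix c x assume hc: "\<forall>i. (\<Sum>x\<in>S'. c x * d x i) = 0" and x: "x \<in> S'"
    define sc where "sc = (\<Sum>x\<in>S'. c x)"
    define l where "l = (\<lambda>x. if x = b1 then 1 - sc else c x)"
    have lS': "(\<Sum>x\<in>S'. l x * g x) = (\<Sum>x\<in>S'. c x * g x)" for g :: "_ \<Rightarrow> 'a"
      by (rule sum.cong) (use SS' in \<open>auto simp: l_def\<close>)
    have suml: "(\<Sum>x\<in>S. l x) = 1"
      using lS'[of "\<lambda>_. 1"] SS' by (simp add: l_def sc_def)
    have comb: "(\<lambda>i. \<Sum>x\<in>S. l x * \<phi>0 x i) = p"
    proof
      fix i
      have "(\<Sum>x\<in>S'. c x * d x i) = (\<Sum>x\<in>S'. c x * \<phi>0 x i) - sc * p i"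
        by (simp add: d_def sc_def right_diff_distrib sum_subtractf sum_distrib_right)
      then have "(\<Sum>x\<in>S'. c x * \<phi>0 x i) = sc * p i" using hc by simp
      then show "(\<Sum>x\<in>S. l x * \<phi>0 x i) = p i"
        using SS' lS'[of "\<lambda>x. \<phi>0 x i"] by (simp add: l_def p_def algebra_simps)
    qed
    have Sf: "\<forall>x\<in>S. \<phi>0 x \<in> fvec n" using \<phi>f S by blast
    have "g0 p = (\<lambda>i. \<Sum>x\<in>S. l x * g0 (\<phi>0 x) i)"
      using aff_comb[OF g0(1) S(2) Sf suml] comb by simp
    also have "\<dots> = (\<lambda>i. \<Sum>x\<in>S. l x * x i)"
      using g0\<phi> S by (intro ext sum.cong) auto
    finally have gp: "b1 = (\<lambda>i. \<Sum>x\<in>S. l x * x i)" using g0\<phi>[OF b1B] by (simp add: p_def)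
    define \<mu> where "\<mu> = (\<lambda>x. if x = b1 then - sc else c x)"
    have \<mu>S': "(\<Sum>x\<in>S'. \<mu> x * g x) = (\<Sum>x\<in>S'. c x * g x)" for g :: "_ \<Rightarrow> 'a"
      by (rule sum.cong) (use SS' in \<open>auto simp: \<mu>_def\<close>)
    have "(\<Sum>x\<in>S. \<mu> x) = 0"
      using \<mu>S'[of "\<lambda>_. 1"] SS' by (simp add: \<mu>_def sc_def)
    moreover have "\<forall>i. (\<Sum>x\<in>S. \<mu> x * x i) = 0"
    proof
      fix i
      have "b1 i = (1 - sc) * b1 i + (\<Sum>x\<in>S'. c x * x i)"
        using fun_cong[OF gp, of i] SS' lS'[of "\<lambda>x. x i"] by (simp add: l_def)
      then show "(\<Sum>x\<in>S. \<mu> x * x i) = 0"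
        using SS' \<mu>S'[of "\<lambda>x. x i"] by (simp add: \<mu>_def algebra_simps)
    qed
    ultimately have "\<forall>x\<in>S. \<mu> x = 0" using S(3) unfolding aff_indep_def by blast
    then have "\<mu> x = 0" using x SS' by blast
    moreover have "x \<noteq> b1" using x SS' by blast
    ultimately show "c x = 0" by (simp add: \<mu>_def)
  qed
  obtain J w where J: "J \<subseteq> {..<n}" "card J = card S'"
    and w: "\<forall>j\<in>J. w j \<in> spn d S' \<and> (\<forall>j'\<in>J. w j j' = (if j' = j then 1 else 0))"
    and winj: "\<forall>u\<in>spn d S'. (\<forall>j\<in>J. u j = 0) \<longrightarrow> u = (\<lambda>_. 0)"
    using GE[OF SS'(3) df indep] by blast
  have finJ: "finite J" using J(1) finite_subset by blast
  have wf: "\<forall>j\<in>J. w j \<in> fvec n" using w spn_fvec[OF df] by blast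
  define L where "L = (\<lambda>u i. p i + (\<Sum>j\<in>J. (u j - p j) * w j i))"
  have La: "affine_map n n L"
  proof (rule am_intro[where b = "\<lambda>i. p i - (\<Sum>j\<in>J. p j * w j i)" and M = "\<lambda>i j. if j \<in> J then w j i else 0"])
    fix u :: "nat \<Rightarrow> 'a" assume u: "u \<in> fvec n"
    show "L u = (\<lambda>i. if i < n then p i - (\<Sum>j\<in>J. p j * w j i) + (\<Sum>j<n. (if j \<in> J then w j i else 0) * u j) else 0)"
    proof
      fix i
      show "L u i = (if i < n then p i - (\<Sum>j\<in>J. p j * w j i) + (\<Sum>j<n. (if j \<in> J then w j i else 0) * u j) else 0)"
      proof (cases "i < n")
        case True
        have "(\<Sum>j<n. (if j \<in> J then w j i else 0) * u j) = (\<Sum>j<n. if j \<in> J then w j i * u j else 0)"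
          by (rule sum.cong) auto
        also have "\<dots> = (\<Sum>j\<in>{..<n} \<inter> J. w j i * u j)"
          by (rule sum.inter_restrict[symmetric]) simp
        also have "{..<n} \<inter> J = J" using J(1) by blast
        finally have e: "(\<Sum>j<n. (if j \<in> J then w j i else 0) * u j) = (\<Sum>j\<in>J. w j i * u j)" .
        show ?thesis using True unfolding e L_def
          by (simp add: left_diff_distrib sum_subtractf algebra_simps)
      next
        case False
        then have "p i = 0" "\<forall>j\<in>J. w j i = 0" using pf wf by (auto simp: fvec_def)
        then show ?thesis using False by (simp add: L_def)
      qed
    qed
  qed
  define R where "R = (\<lambda>u. g0 (L u))"
  show ?thesis
  proof (intro exI[of _ J] exI[of _ R] conjI)
    show "J \<subseteq> {..<n}" by (rule J(1))
    show "card J = card S - 1" using J(2) SS' by simp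
    show "affine_map n m R" unfolding R_def by (rule am_comp[OF La g0(1)])
    show "\<forall>z z'. (\<forall>j\<in>J. z j = z' j) \<longrightarrow> R z = R z'"
      unfolding R_def L_def by auto
    show "\<forall>b\<in>B. R (\<phi>0 b) = b"
    proof
      fix b assume b: "b \<in> B"
      obtain l where l: "(\<Sum>x\<in>S. l x) = 1" "b = (\<lambda>j. \<Sum>x\<in>S. l x * x j)" using HS b by blast
      have SB: "\<forall>x\<in>S. x \<in> fvec m" using S B by blast
      have "f0 b = (\<lambda>i. \<Sum>x\<in>S. l x * f0 x i)"
        using aff_comb[OF f0(1) S(2) SB l(1)] l(2) by simp
      moreover have "\<forall>x\<in>S. \<phi>0 x = f0 x" using f0(2) S(1) by blast
      ultimately have \<phi>b: "\<phi>0 b = (\<lambda>i. \<Sum>x\<in>S. l x * \<phi>0 x i)"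
        using f0(2) b by simp
      define u where "u = (\<lambda>i. \<phi>0 b i - p i)"
      have "u = lc l d S'"
      proof
        fix i
        have "(\<Sum>x\<in>S. l x * \<phi>0 x i) - p i = (\<Sum>x\<in>S. l x * (\<phi>0 x i - p i))"
          using l(1) by (simp add: right_diff_distrib sum_subtractf sum_distrib_right[symmetric])
        also have "\<dots> = (\<Sum>x\<in>S'. l x * d x i)"
          using SS' by (simp add: d_def p_def)
        finally show "u i = lc l d S' i"
          using fun_cong[OF \<phi>b, of i] by (simp add: u_def lc_def)
      qed
      then have us: "u \<in> spn d S'" by (auto simp: spn_def)
      have zs: "(\<lambda>i. (\<Sum>j\<in>J. u j * w j i) - u i) \<in> spn d S'"
        by (rule spn_diff[OF spn_lincomb us]) (use finJ w in auto)
      have "\<forall>j'\<in>J. (\<lambda>i. (\<Sum>j\<in>J. u j * w j i) - u i) j' = 0"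
      proof
        fix j' assume j': "j' \<in> J"
        have "(\<Sum>j\<in>J. u j * w j j') = (\<Sum>j\<in>J. if j = j' then u j else 0)"
          by (rule sum.cong) (use w j' in auto)
        also have "\<dots> = u j'" using j' finJ by simp
        finally show "(\<lambda>i. (\<Sum>j\<in>J. u j * w j i) - u i) j' = 0" by simp
      qed
      then have "(\<lambda>i. (\<Sum>j\<in>J. u j * w j i) - u i) = (\<lambda>_. 0)" using winj[rule_format, OF zs] by simp
      then have uu: "\<And>i. (\<Sum>j\<in>J. u j * w j i) = u i" by (metis right_minus_eq)
      have "L (\<phi>0 b) = \<phi>0 b"
      proof
        fix i
        have "L (\<phi>0 b) i = p i + (\<Sum>j\<in>J. u j * w j i)" by (simp add: L_def u_def)
        also have "\<dots> = \<phi>0 b i" unfolding uu by (simp add: u_def)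
        finally show "L (\<phi>0 b) i = \<phi>0 b i" .
      qed
      then show "R (\<phi>0 b) = b" using g0\<phi>[OF b] by (simp add: R_def)
    qed
  qed
qed


lemma ex_aff_facts:
  fixes \<B> :: "('a::{finite,comm_ring_1}) config set"
  shows "\<And>A. A \<subseteq> fvec n \<Longrightarrow> (\<forall>(k, C)\<in>\<B>. \<not> affine_copy k n C A) \<Longrightarrow> card A \<le> ex_aff n \<B>"
    and "\<exists>A. A \<subseteq> fvec n \<and> card A = ex_aff n \<B> \<and> (ex_aff n \<B> = 0 \<or> (\<forall>(k, C)\<in>\<B>. \<not> affine_copy k n C A))"
proof -
  let ?X = "{card A | A. A \<subseteq> fvec n \<and> (\<forall>(k, C)\<in>\<B>. \<not> affine_copy k n C A)}"
  have "?X \<subseteq> card ` Pow (fvec n :: (nat \<Rightarrow> 'a) set)" by auto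
  then have finX: "finite (insert 0 ?X)" using fvec_finite_card(1) finite_subset by blast
  show "card A \<le> ex_aff n \<B>" if "A \<subseteq> fvec n" "\<forall>(k, C)\<in>\<B>. \<not> affine_copy k n C A" for A
    unfolding ex_aff_def by (rule Max_ge[OF finX]) (use that in blast)
  have "ex_aff n \<B> \<in> insert 0 ?X" unfolding ex_aff_def by (rule Max_in[OF finX]) simp
  then show "\<exists>A. A \<subseteq> fvec n \<and> card A = ex_aff n \<B> \<and> (ex_aff n \<B> = 0 \<or> (\<forall>(k, C)\<in>\<B>. \<not> affine_copy k n C A))"
  proof
    assume "ex_aff n \<B> = 0"
    then show ?thesis by (intro exI[of _ "{}"]) auto
  next
    assume "ex_aff n \<B> \<in> ?X"
    then show ?thesis by force
  qed
qed

lemma count_T: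
  fixes B :: "(nat \<Rightarrow> 'a::{finite,field}) set" and \<F> :: "'a config set"
    and \<phi>0 f0 R :: "(nat \<Rightarrow> 'a) \<Rightarrow> nat \<Rightarrow> 'a"
  assumes B: "B \<subseteq> fvec m" and Fam: "\<forall>(k, F)\<in>\<F>. F \<subseteq> fvec k"
   and f0: "affine_map m n f0" "\<forall>b\<in>B. \<phi>0 b = f0 b"
   and J: "J \<subseteq> {..<n}"
   and R: "affine_map n m R" "\<forall>b\<in>B. R (\<phi>0 b) = b" "\<forall>z z'. (\<forall>j\<in>J. z j = z' j) \<longrightarrow> R z = R z'"
   and free: "\<forall>(k, C)\<in>conf_prod m B ` \<F>. \<not> affine_copy k n C A"
  shows "card {t\<in>fvec n. \<forall>b\<in>B. (\<lambda>i. \<phi>0 b i + t i) \<in> A}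
     \<le> card (UNIV :: 'a set) ^ card J * ex_aff (n - card J) \<F>"
proof -
  define n' where "n' = n - card J"
  define T where "T = {t\<in>fvec n. \<forall>b\<in>B. (\<lambda>i. \<phi>0 b i + t i) \<in> A}"
  have finJ: "finite J" using J finite_subset by blast
  have "card ({..<n} - J) = n'" using J finJ by (simp add: card_Diff_subset n'_def)
  then obtain \<beta> where \<beta>: "bij_betw \<beta> {..<n'} ({..<n} - J)"
    using finite_same_card_bij[of "{..<n'}" "{..<n} - J"] by auto
  define \<beta>' where "\<beta>' = inv_into {..<n'} \<beta>"
  have \<beta>r: "\<beta> i < n" "\<beta> i \<notin> J" if "i < n'" for i
    using \<beta> that unfolding bij_betw_def by auto
  have \<beta>'r: "\<beta>' i < n'" "\<beta> (\<beta>' i) = i" if "i < n" "i \<notin> J" for i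
  proof -
    have i: "i \<in> {..<n} - J" using that by simp
    show "\<beta> (\<beta>' i) = i" unfolding \<beta>'_def by (rule bij_betw_inv_into_right[OF \<beta> i])
    have "\<beta>' i \<in> {..<n'}" unfolding \<beta>'_def
      by (rule inv_into_into) (use \<beta> i in \<open>simp add: bij_betw_def\<close>)
    then show "\<beta>' i < n'" by simp
  qed
  have \<beta>l: "\<beta>' (\<beta> i) = i" if "i < n'" for i
    unfolding \<beta>'_def using bij_betw_inv_into_left[OF \<beta>] that by simp
  define K where "K = (\<lambda>z::nat \<Rightarrow> 'a. \<lambda>i. if i < n' then 0 + (if True then z (\<beta> i) else 0) else 0)"
  have Ka: "affine_map n n' K" unfolding K_def by (rule am_select) (use \<beta>r in auto)
  define E where "E = (\<lambda>v (u::nat \<Rightarrow> 'a) i. if i < n then (if i \<in> J then v i else 0) + (if i \<notin> J then u (\<beta>' i) else 0) else 0)"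
  have Ea: "affine_map n' n (E v)" for v
    unfolding E_def by (rule am_select) (use \<beta>'r in auto)
  have EJ: "\<forall>u j. j \<in> J \<longrightarrow> E v u j = E v (\<lambda>_. 0) j" for v
    using J by (auto simp: E_def)
  have KE: "\<forall>u\<in>fvec n'. K (E v u) = u" for v
  proof
    fix u :: "nat \<Rightarrow> 'a" assume u: "u \<in> fvec n'"
    show "K (E v u) = u"
    proof
      fix i show "K (E v u) i = u i"
        using \<beta>r[of i] \<beta>l[of i] fvecD[OF u, of i] by (auto simp: K_def E_def)
    qed
  qed
  define V where "V = PiE J (\<lambda>_. UNIV :: 'a set)"
  define Tv where "Tv = (\<lambda>v. {t\<in>T. \<forall>j\<in>J. t j = v j})"
  have EK: "E v (K t) = t" if "t \<in> Tv v" for t v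
  proof
    fix i
    have t: "t \<in> fvec n" "\<forall>j\<in>J. t j = v j" using that by (auto simp: Tv_def T_def)
    show "E v (K t) i = t i"
    proof (cases "i < n")
      case True
      then show ?thesis using t(2) \<beta>'r[of i] by (auto simp: E_def K_def)
    next
      case False
      then show ?thesis using fvecD[OF t(1), of i] by (simp add: E_def)
    qed
  qed
  have finT: "finite T" unfolding T_def using fvec_finite_card(1)[where n = n and 'a = 'a] by simp
  have cardTv: "card (Tv v) \<le> ex_aff n' \<F>" for v
  proof -
    have inj: "inj_on K (Tv v)" by (rule inj_on_inverseI[of _ "E v"]) (use EK in blast)
    define C where "C = K ` Tv v"
    have Cf: "C \<subseteq> fvec n'" unfolding C_def K_def fvec_def by auto
    have Cfree: "\<forall>(k, F)\<in>\<F>. \<not> affine_copy k n' F C"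
    proof (clarify)
      fix k F assume kF: "(k, F) \<in> \<F>" and cp: "affine_copy k n' F C"
      obtain \<psi> where \<psi>: "nondeg_hom k n' F C \<psi>" using cp unfolding affine_copy_def by blast
      have Fk: "F \<subseteq> fvec k" using Fam kF by blast
      have inA: "\<forall>b\<in>B. \<forall>y\<in>F. (\<lambda>i. \<phi>0 b i + E v (\<psi> y) i) \<in> A"
      proof (intro ballI)
        fix b y assume b: "b \<in> B" and y: "y \<in> F"
        have "\<psi> y \<in> C" using \<psi> y unfolding nondeg_hom_def by blast
        then obtain t where t: "t \<in> Tv v" "\<psi> y = K t" unfolding C_def by blast
        then have "E v (\<psi> y) = t" using EK by simp
        then show "(\<lambda>i. \<phi>0 b i + E v (\<psi> y) i) \<in> A" using t(1) b by (simp add: Tv_def T_def)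
      qed
      have "affine_copy (m + k) n (snd (conf_prod m B (k, F))) A"
        by (rule copy_construct[OF B Fk f0 R Ea EJ Ka KE \<psi> inA])
      moreover have "conf_prod m B (k, F) = (m + k, snd (conf_prod m B (k, F)))"
        by (simp add: conf_prod_def)
      moreover have "conf_prod m B (k, F) \<in> conf_prod m B ` \<F>" using kF by blast
      ultimately show False using free by fastforce
    qed
    have "card (Tv v) = card C" unfolding C_def using card_image[OF inj] by simp
    also have "\<dots> \<le> ex_aff n' \<F>" by (rule ex_aff_facts(1)[OF Cf Cfree])
    finally show ?thesis .
  qed
  have "T \<subseteq> (\<Union>v\<in>V. Tv v)"
  proof
    fix t assume t: "t \<in> T"
    have "restrict t J \<in> V" by (simp add: V_def)
    moreover have "t \<in> Tv (restrict t J)" using t by (simp add: Tv_def)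
    ultimately show "t \<in> (\<Union>v\<in>V. Tv v)" by blast
  qed
  have finV: "finite V" unfolding V_def by (rule finite_PiE[OF finJ]) simp
  have finU: "finite (\<Union>v\<in>V. Tv v)" using finV finT by (auto simp: Tv_def)
  have "card T \<le> card (\<Union>v\<in>V. Tv v)" by (rule card_mono[OF finU \<open>T \<subseteq> _\<close>])
  also have "\<dots> \<le> (\<Sum>v\<in>V. card (Tv v))" by (rule card_UN_le[OF finV])
  also have "\<dots> \<le> card V * ex_aff n' \<F>" using sum_bounded_above[of V "\<lambda>v. card (Tv v)", OF cardTv] by simp
  also have "card V = card (UNIV :: 'a set) ^ card J" by (simp add: V_def card_PiE finJ)
  finally show ?thesis unfolding T_def n'_def .
qed


lemma fib_bound:
  fixes B :: "(nat \<Rightarrow> 'a::{finite,field}) set" and \<F> :: "'a config set"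
    and \<phi>0 :: "(nat \<Rightarrow> 'a) \<Rightarrow> nat \<Rightarrow> 'a"
  assumes B: "B \<subseteq> fvec m" and S: "S \<subseteq> B" "finite S" "aff_indep S" and b1: "b1 \<in> S"
   and HS: "\<forall>b\<in>B. \<exists>l. (\<Sum>x\<in>S. l x) = 1 \<and> b = (\<lambda>j. \<Sum>x\<in>S. l x * x j)"
   and Fam: "\<forall>(k, F)\<in>\<F>. F \<subseteq> fvec k"
   and free: "\<forall>(k, C)\<in>conf_prod m B ` \<F>. \<not> affine_copy k n C A"
   and \<phi>0: "nondeg_hom m n B A \<phi>0"
  defines "Fib \<equiv> {\<phi>. nondeg_hom m n B A \<phi> \<and> (\<forall>x. x \<notin> B \<longrightarrow> \<phi> x = (\<lambda>_. 0)) \<and>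
      restrict (\<lambda>x i. \<phi> x i - \<phi> b1 i) (S - {b1}) = restrict (\<lambda>x i. \<phi>0 x i - \<phi>0 b1 i) (S - {b1})}"
  shows "finite Fib \<and> card Fib \<le> card (UNIV :: 'a set) ^ (card S - 1) * ex_aff (n - (card S - 1)) \<F>"
proof -
  obtain J R where J: "J \<subseteq> {..<n}" "card J = card S - 1" and R: "affine_map n m R" "\<forall>b\<in>B. R (\<phi>0 b) = b"
      "\<forall>z z'. (\<forall>j\<in>J. z j = z' j) \<longrightarrow> R z = R z'"
    using get_JR[OF B S b1 HS \<phi>0] by blast
  obtain f0 where f0: "affine_map m n f0" "\<forall>b\<in>B. \<phi>0 b = f0 b"
    using \<phi>0 unfolding nondeg_hom_def affine_hom_def by blast
  define T where "T = {t\<in>fvec n. \<forall>b\<in>B. (\<lambda>i. \<phi>0 b i + t i) \<in> A}"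
  have cT: "card T \<le> card (UNIV :: 'a set) ^ (card S - 1) * ex_aff (n - (card S - 1)) \<F>"
    using count_T[OF B Fam f0 J(1) R free] unfolding T_def J(2) .
  have finT: "finite T" unfolding T_def using fvec_finite_card(1)[where n = n and 'a = 'a] by simp
  define \<tau> where "\<tau> = (\<lambda>\<phi> :: (nat \<Rightarrow> 'a) \<Rightarrow> nat \<Rightarrow> 'a. \<lambda>i. \<phi> b1 i - \<phi>0 b1 i)"
  have b1B: "b1 \<in> B" using b1 S by blast
  have main: "\<forall>b\<in>B. \<phi> b = (\<lambda>i. \<phi>0 b i + \<tau> \<phi> i)" "\<tau> \<phi> \<in> T" if \<phi>: "\<phi> \<in> Fib" for \<phi>
  proof -
    have nd: "nondeg_hom m n B A \<phi>" using \<phi> by (simp add: Fib_def)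
    have rs: "restrict (\<lambda>x i. \<phi> x i - \<phi> b1 i) (S - {b1}) = restrict (\<lambda>x i. \<phi>0 x i - \<phi>0 b1 i) (S - {b1})"
      using \<phi> by (simp add: Fib_def)
    obtain f where f: "affine_map m n f" "\<forall>b\<in>B. \<phi> b = f b"
      using nd unfolding nondeg_hom_def affine_hom_def by blast
    have \<tau>f: "\<tau> \<phi> \<in> fvec n"
    proof -
      have "f b1 \<in> fvec n" "f0 b1 \<in> fvec n" using am_fvec f f0 b1B B by blast+
      then show ?thesis using f(2) f0(2) b1B by (simp add: \<tau>_def fvec_def)
    qed
    have ah: "affine_hom m n B (\<lambda>x i. \<phi>0 x i + \<tau> \<phi> i)"
      unfolding affine_hom_def
      by (rule exI[of _ "\<lambda>x i. f0 x i + \<tau> \<phi> i"]) (use am_add[OF f0(1) am_const[OF \<tau>f]] f0(2) in auto)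
    have ah0: "affine_hom m n B \<phi>" using nd unfolding nondeg_hom_def by blast
    have agree: "\<forall>x\<in>S. \<phi> x = (\<lambda>i. \<phi>0 x i + \<tau> \<phi> i)"
    proof
      fix x assume x: "x \<in> S"
      show "\<phi> x = (\<lambda>i. \<phi>0 x i + \<tau> \<phi> i)"
      proof (cases "x = b1")
        case True
        then show ?thesis by (simp add: \<tau>_def)
      next
        case False
        then have "x \<in> S - {b1}" using x by simp
        then have "(\<lambda>i. \<phi> x i - \<phi> b1 i) = (\<lambda>i. \<phi>0 x i - \<phi>0 b1 i)"
          using fun_cong[OF rs, of x] by simp
        then show ?thesis by (simp add: \<tau>_def fun_eq_iff algebra_simps)
      qed
    qed
    show eqB: "\<forall>b\<in>B. \<phi> b = (\<lambda>i. \<phi>0 b i + \<tau> \<phi> i)"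
      using hom_unique[OF B S(1,2) HS ah0 ah agree] by blast
    have "\<forall>b\<in>B. \<phi> b \<in> A" using nd unfolding nondeg_hom_def by blast
    then show "\<tau> \<phi> \<in> T" using eqB \<tau>f by (auto simp: T_def)
  qed
  have inj: "inj_on \<tau> Fib"
  proof (rule inj_onI)
    fix \<phi> \<psi> assume \<phi>: "\<phi> \<in> Fib" and \<psi>: "\<psi> \<in> Fib" and e: "\<tau> \<phi> = \<tau> \<psi>"
    show "\<phi> = \<psi>"
    proof
      fix x show "\<phi> x = \<psi> x"
      proof (cases "x \<in> B")
        case True
        then show ?thesis using main(1)[OF \<phi>] main(1)[OF \<psi>] e by simp
      next
        case False
        then show ?thesis using \<phi> \<psi> by (simp add: Fib_def)
      qed
    qed
  qed
  have sub: "\<tau> ` Fib \<subseteq> T" using main(2) by blast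
  have "finite Fib" using inj_on_finite[OF inj sub finT] .
  moreover have "card Fib \<le> card T" using card_inj_on_le[OF inj sub finT] .
  ultimately show ?thesis using cT by simp
qed


theorem lemma4p1:
  fixes B :: "(nat \<Rightarrow> 'a::{finite,field}) set"
    and \<F> :: "'a config set"
    and m n :: nat
  assumes "B \<subseteq> fvec m"
    and "rank_aff B \<ge> 1"
    and "\<forall>(k, F)\<in>\<F>. F \<subseteq> fvec k"
    and "n \<ge> rank_aff B"
  shows "c_min m n B (ex_aff n (conf_prod m B ` \<F>))
     \<le> card (UNIV :: 'a set) ^ (rank_aff B - 1) * (card (UNIV :: 'a set) ^ n) ^ (rank_aff B - 1)
        * ex_aff (n - rank_aff B + 1) \<F>"
proof -
  note B = assms(1) and r1 = assms(2) and Fam = assms(3) and rn = assms(4)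
  define q where "q = card (UNIV :: 'a set)"
  define r where "r = rank_aff B"
  define s where "s = ex_aff (n - r + 1) \<F>"
  define t where "t = ex_aff n (conf_prod m B ` \<F>)"
  obtain S where S: "S \<subseteq> B" "finite S" "aff_indep S" "card S = r"
    using rank_facts(2)[OF B] unfolding r_def by blast
  have "S \<noteq> {}" using S r1 unfolding r_def by auto
  then obtain b1 where b1: "b1 \<in> S" by blast
  have HS: "\<forall>b\<in>B. \<exists>l. (\<Sum>x\<in>S. l x) = 1 \<and> b = (\<lambda>j. \<Sum>x\<in>S. l x * x j)"
    using hull_lemma[OF B S(1,2,3)] S(4) unfolding r_def by blast
  obtain A where A: "A \<subseteq> fvec n" "card A = t" "t = 0 \<or> (\<forall>(k, C)\<in>conf_prod m B ` \<F>. \<not> affine_copy k n C A)"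
    using ex_aff_facts(2)[of n "conf_prod m B ` \<F>"] unfolding t_def by blast
  define H where "H = {\<phi>. nondeg_hom m n B A \<phi> \<and> (\<forall>x. x \<notin> B \<longrightarrow> \<phi> x = (\<lambda>_. 0))}"
  have cmin: "c_min m n B t \<le> num_nondeg_hom m n B A"
  proof -
    let ?Y = "{num_nondeg_hom m n B A | A. A \<subseteq> fvec n \<and> card A = t}"
    have "?Y \<subseteq> (\<lambda>A. num_nondeg_hom m n B A) ` Pow (fvec n :: (nat \<Rightarrow> 'a) set)" by auto
    then have "finite ?Y" using fvec_finite_card(1) finite_subset by blast
    then show ?thesis unfolding c_min_def by (rule Min_le) (use A in blast)
  qed
  have num: "num_nondeg_hom m n B A = card H" by (simp add: num_nondeg_hom_def H_def)
  have b1B: "b1 \<in> B" using b1 S by blast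
  have "card H \<le> q ^ (r - 1) * (q ^ n) ^ (r - 1) * s"
  proof (cases "t = 0")
    case True
    then have "A = {}" using A fvec_finite_card(1)[where n = n and 'a = 'a] finite_subset by fastforce
    then have "H = {}" using b1B unfolding H_def nondeg_hom_def by blast
    then show ?thesis by simp
  next
    case False
    then have free: "\<forall>(k, C)\<in>conf_prod m B ` \<F>. \<not> affine_copy k n C A" using A(3) by blast
    define S' where "S' = S - {b1}"
    define \<delta> where "\<delta> = (\<lambda>\<phi> :: (nat \<Rightarrow> 'a) \<Rightarrow> nat \<Rightarrow> 'a. restrict (\<lambda>x i. \<phi> x i - \<phi> b1 i) S')"
    define D where "D = PiE S' (\<lambda>_. fvec n :: (nat \<Rightarrow> 'a) set)"
    define Fib where "Fib = (\<lambda>d. {\<phi>\<in>H. \<delta> \<phi> = d})"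
    have finS': "finite S'" using S(2) by (simp add: S'_def)
    have cS': "card S' = r - 1" using S b1 by (simp add: S'_def)
    have finD: "finite D" unfolding D_def by (rule finite_PiE[OF finS']) (use fvec_finite_card(1) in blast)
    have cD: "card D \<le> (q ^ n) ^ (r - 1)"
    proof -
      have "card D = card (fvec n :: (nat \<Rightarrow> 'a) set) ^ (r - 1)"
        by (simp add: D_def card_PiE finS' cS')
      also have "\<dots> \<le> (q ^ n) ^ (r - 1)"
        by (rule power_mono) (use fvec_finite_card(2) in \<open>auto simp: q_def\<close>)
      finally show ?thesis .
    qed
    have HD: "H \<subseteq> (\<Union>d\<in>D. Fib d)"
    proof
      fix \<phi> assume \<phi>: "\<phi> \<in> H"
      obtain f where f: "affine_map m n f" "\<forall>b\<in>B. \<phi> b = f b"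
        using \<phi> unfolding H_def nondeg_hom_def affine_hom_def by blast
      have "\<phi> x \<in> fvec n" if "x \<in> B" for x using f am_fvec B that by (metis subsetD)
      then have "\<delta> \<phi> \<in> D" using S b1B unfolding D_def \<delta>_def S'_def by (auto simp: fvec_def)
      then show "\<phi> \<in> (\<Union>d\<in>D. Fib d)" using \<phi> by (auto simp: Fib_def)
    qed
    have fb: "finite (Fib d) \<and> card (Fib d) \<le> q ^ (r - 1) * s" for d
    proof (cases "Fib d = {}")
      case True
      then show ?thesis by simp
    next
      case False
      then obtain \<phi>0 where \<phi>0: "\<phi>0 \<in> Fib d" by blast
      have nd0: "nondeg_hom m n B A \<phi>0" using \<phi>0 by (simp add: Fib_def H_def)
      have eq: "Fib d = {\<phi>. nondeg_hom m n B A \<phi> \<and> (\<forall>x. x \<notin> B \<longrightarrow> \<phi> x = (\<lambda>_. 0)) \<and>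
        restrict (\<lambda>x i. \<phi> x i - \<phi> b1 i) (S - {b1}) = restrict (\<lambda>x i. \<phi>0 x i - \<phi>0 b1 i) (S - {b1})}"
        using \<phi>0 by (auto simp: Fib_def H_def \<delta>_def S'_def)
      have "n - (card S - 1) = n - r + 1" using S(4) r1 rn unfolding r_def by simp
      then show ?thesis
        using fib_bound[OF B S(1,2,3) b1 HS Fam free nd0] S(4) unfolding eq q_def s_def by simp
    qed
    have finU: "finite (\<Union>d\<in>D. Fib d)" using finD fb by blast
    have "card H \<le> card (\<Union>d\<in>D. Fib d)" by (rule card_mono[OF finU HD])
    also have "\<dots> \<le> (\<Sum>d\<in>D. card (Fib d))" by (rule card_UN_le[OF finD])
    also have "\<dots> \<le> card D * (q ^ (r - 1) * s)"
      using sum_bounded_above[of D "\<lambda>d. card (Fib d)" "q ^ (r - 1) * s"] fb by simp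
    also have "\<dots> \<le> (q ^ n) ^ (r - 1) * (q ^ (r - 1) * s)" by (rule mult_right_mono[OF cD]) simp
    also have "\<dots> = q ^ (r - 1) * (q ^ n) ^ (r - 1) * s" by simp
    finally show ?thesis .
  qed
  then show ?thesis using cmin num unfolding q_def r_def s_def t_def by simp
qed

end
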